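(* Let $\mathcal{L}$, $\mathcal{C}$, $\mathcal{M}$, the types $\sigma_C,\rho_C,\sigma_M,\rho^1_M,\rho^2_M$, the label sets $L_M$ and the repository $\Delta^{\mathcal{C},\mathcal{M}}_{\mathcal{L}}$ be as in the context. Let $\Gamma$ be a finite basis with $\Gamma\subseteq\{x_C:\sigma_C\to\rho_C\mid C\in\mathcal{C}\}\cup\{x^{\rho}_M:(\sigma_M\to\rho\cap\rho^1_M)\to(\sigma_M\to\rho+\rho^2_M)\mid M\in\mathcal{M},\ \rho\in\mathbb{T}_R,\ [\![\rho]\!]\text{ defined}\}$ (where $x_C$, $x^\rho_M$ are distinct term variables), and let $\sigma\in\mathbb{T}$, $\rho\in\mathbb{T}_R$ be such that $[\![\sigma\to\rho]\!]$ is defined. Let $k=\max(\{\mathrm{level}([\![\rho_C]\!])\mid C\in\mathcal{C}\}\cup\{\mathrm{level}([\![\rho^2_M]\!])\mid M\in\mathcal{M}\}\cup\{\mathrm{level}([\![\rho]\!])\})$. Let $M_1,\ldots,M_n\in\mathcal{M}$ and $C\in\mathcal{C}$. If $\Gamma\vdash x_C\triangleright x^{\rho_1}_{M_1}\triangleright\cdots\triangleright x^{\rho_n}_{M_n}:\sigma\to\rho$ in the type assignment system for $\Lambda_R$, then $\Delta^{\mathcal{C},\mathcal{M}}_{\mathcal{L}}\vdash_k C\triangleright M_1\triangleright\cdots\triangleright M_n:[\![\sigma\to\rho]\!]$ in $\mathsf{BCL}_k(\mathbb{T}_C)$.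
   Context: \textbf{The calculus $\Lambda_R$.} Terms: $M,N ::= x \mid \lambda x.M \mid MN \mid M.l \mid R \mid M\oplus R$, records $R ::= \langle l_i = M_i \mid i\in I\rangle$ ($I$ finite, labels pairwise distinct), $\mathit{lbl}(\langle l_i=M_i\mid i\in I\rangle)=\{l_i\mid i\in I\}$. $\mathbf{Y}=\lambda f.(\lambda x.f(xx))(\lambda x.f(xx))$. A class is a closed term $\mathbf{Y}(\lambda\,\mathit{myClass}\,\lambda\,\mathit{state}.\,R)$; a mixin is a closed term $\lambda\,\mathit{argClass}.\,\mathbf{Y}(\lambda\,\mathit{myClass}\,\lambda\,\mathit{state}.\,(\mathit{argClass}\;\mathit{state})\oplus R_M)$ with $R_M$ a record. \textbf{Types for $\Lambda_R$.} $\mathbb{T}\ni\sigma ::= a\mid\omega\mid\sigma_1\to\sigma_2\mid\sigma_1\cap\sigma_2\mid\rho$, $\mathbb{T}_R\ni\rho ::= \langle\rangle\mid\langle l:\sigma\rangle\mid\rho_1+\rho_2\mid\rho_1\cap\rho_2$. Subtyping $\le$ is the least preorder with: $\sigma\le\omega$; $\omega\le\omega\to\omega$; $\sigma\cap\tau\le\sigma$; $\sigma\cap\tau\le\tau$; $\sigma\le\tau_1,\sigma\le\tau_2\Rightarrow\sigma\le\tau_1\cap\tau_2$; $(\sigma\to\tau_1)\cap(\sigma\to\tau_2)\le\sigma\to\tau_1\cap\tau_2$; $\sigma_2\le\sigma_1,\tau_1\le\tau_2\Rightarrow\sigma_1\to\tau_1\le\sigma_2\to\tau_2$; $\langle l:\sigma\rangle\le\langle\rangle$;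 $\langle l:\sigma\rangle\cap\langle l:\tau\rangle\le\langle l:\sigma\cap\tau\rangle$; $\sigma\le\tau\Rightarrow\langle l:\sigma\rangle\le\langle l:\tau\rangle$; $\rho+\langle\rangle=\langle\rangle+\rho=\rho$; $(\rho_1+\rho_2)+\rho_3=\rho_1+(\rho_2+\rho_3)$; $(\rho_1\cap\rho_2)+\rho_3=(\rho_1+\rho_3)\cap(\rho_2+\rho_3)$; $\langle l:\sigma\rangle+(\langle l:\tau\rangle\cap\rho)=\langle l:\tau\rangle\cap\rho$; $\langle l:\sigma\rangle+(\langle l':\tau\rangle\cap\rho)=\langle l':\tau\rangle\cap(\langle l:\sigma\rangle+\rho)$ if $l\neq l'$; $\rho_1\le\rho_2\Rightarrow\rho_1+\rho\le\rho_2+\rho$; $\rho_1=\rho_2\Rightarrow\rho+\rho_1=\rho+\rho_2$ ($=$ meaning $\le$ both ways). $\mathit{lbl}(\langle\rangle)=\emptyset$, $\mathit{lbl}(\langle l:\sigma\rangle)=\{l\}$, $\mathit{lbl}(\rho_1\cap\rho_2)=\mathit{lbl}(\rho_1+\rho_2)=\mathit{lbl}(\rho_1)\cup\mathit{lbl}(\rho_2)$. \textbf{Type assignment for $\Lambda_R$}: variable axiom from the basis; $\to$-introduction/elimination; $\cap$-introduction; $\Gamma\vdash M:\omega$; subsumption along $\le$; $\Gamma\vdash\langle l_i=M_i\mid i\in I\rangle:\langle\rangle$; from $\Gamma\vdash M_k:\sigma$, $k\in I$ infer $\Gamma\vdash\langle l_i=M_i\mid i\in I\rangle:\langle l_k:\sigma\rangle$;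 from $\Gamma\vdash M:\langle l:\sigma\rangle$ infer $\Gamma\vdash M.l:\sigma$; from $\Gamma\vdash M:\rho_1$, $\Gamma\vdash R:\rho_2$, $\mathit{lbl}(R)=\mathit{lbl}(\rho_2)$ infer $\Gamma\vdash M\oplus R:\rho_1+\rho_2$. \textbf{$\mathsf{BCL}_k(\mathbb{T}_C)$.} Types $\mathbb{T}_C\ni\tau ::= a\mid\alpha\mid\omega\mid\tau_1\to\tau_2\mid\tau_1\cap\tau_2\mid c(\tau)$; subtyping: the arrow/intersection axioms above plus $\tau_1\le\tau_2\Rightarrow c(\tau_1)\le c(\tau_2)$ and $c(\tau_1)\cap c(\tau_2)\le c(\tau_1\cap\tau_2)$. Level: $0$ for $\omega,a,\alpha$; $\mathrm{level}(c(\tau))=1+\mathrm{level}(\tau)$; $\mathrm{level}(\sigma\to\tau)=1+\max(\mathrm{level}(\sigma),\mathrm{level}(\tau))$; $\mathrm{level}(\sigma\cap\tau)=\max(\mathrm{level}(\sigma),\mathrm{level}(\tau))$; $\mathrm{level}(S)=\max_{\alpha\in\mathrm{dom}(S)}\mathrm{level}(S(\alpha))$ for substitutions $S$. A repository $\Delta$ is a finite set of $C:\tau$; combinatory terms $E::=C\mid(E\,E')$. Rules: from $C:\tau\in\Delta$, $\mathrm{level}(S)\le k$ infer $\Delta\vdash_k C:S(\tau)$; $\to$-elimination; $\cap$-introduction; subsumption. \textbf{Translation.} Fixed finite label set $\mathcal{L}$, unary constructors $\langle\!\langle\cdot\rangle\!\rangle$ and $l(\cdot)$ for $l\in\mathcal{L}$;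 partial map $[\![\omega]\!]=\omega$, $[\![a]\!]=a$, $[\![\sigma\to\tau]\!]=[\![\sigma]\!]\to[\![\tau]\!]$, $[\![\sigma\cap\tau]\!]=[\![\sigma]\!]\cap[\![\tau]\!]$, $[\![\langle l:\tau\rangle]\!]=\langle\!\langle l([\![\tau]\!])\rangle\!\rangle$, $[\![\langle\rangle]\!]=\langle\!\langle\omega\rangle\!\rangle$; undefined on types containing $+$. \textbf{Setting.} $\mathcal{C}$ finite set of classes with $\sigma_C,\rho_C$, $[\![\sigma_C\to\rho_C]\!]$ defined, $\vdash C:\sigma_C\to\rho_C$. $\mathcal{M}$ finite set of mixins with $\sigma_M,\rho^1_M,\rho^2_M$ whose translations are defined and such that for all $\rho\in\mathbb{T}_R$, $\vdash M:(\sigma_M\to\rho\cap\rho^1_M)\to(\sigma_M\to\rho+\rho^2_M)$; $L_M=\mathit{lbl}(\rho^2_M)\subseteq\mathcal{L}$ non-empty, the labels defined by $M$. Repository $\Delta^{\mathcal{C},\mathcal{M}}_{\mathcal{L}}=\{C:[\![\sigma_C\to\rho_C]\!]\}\cup\{M:(([\![\sigma_M]\!]\to[\![\rho^1_M]\!])\to([\![\sigma_M]\!]\to[\![\rho^2_M]\!]))\cap\bigcap_{l\in\mathcal{L}\setminus L_M}(([\![\sigma_M]\!]\to\langle\!\langle l(\alpha_l)\rangle\!\rangle)\to([\![\sigma_M]\!]\to\langle\!\langle l(\alpha_l)\rangle\!\rangle))\}$. $x\triangleright f$ means $f\,x$, left associative. *)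

theory Defs
  imports Main
begin

section \<open>The calculus Lambda_R\<close>

text \<open>Term variables are natural numbers, labels range over a linearly ordered type 'l
 (the order is only used to form the finite intersection in the mixin types).\<close>

type_synonym var = nat

datatype 'l trm =
    Var var
  | Lam var "'l trm"
  | App "'l trm" "'l trm"
  | Sel "'l trm" 'l
  | Rec "('l \<times> 'l trm) list"
  | Ext "'l trm" "('l \<times> 'l trm) list"

fun fv :: "'l trm \<Rightarrow> var set" where
  "fv (Var x) = {x}"
| "fv (Lam x M) = fv M - {x}"
| "fv (App M N) = fv M \<union> fv N"
| "fv (Sel M l) = fv M"
| "fv (Rec fs) = (\<Union>p\<in>set fs. fv (snd p))"
| "fv (Ext M fs) = fv M \<union> (\<Union>p\<in>set fs. fv (snd p))"

definition closed :: "'l trm \<Rightarrow> bool" where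
  "closed M \<longleftrightarrow> fv M = {}"

definition is_record :: "('l \<times> 'l trm) list \<Rightarrow> bool" where
  "is_record fs \<longleftrightarrow> distinct (map fst fs)"

definition lbl_rec :: "('l \<times> 'l trm) list \<Rightarrow> 'l set" where
  "lbl_rec fs = fst ` set fs"

definition Ycomb :: "var \<Rightarrow> var \<Rightarrow> 'l trm" where
  "Ycomb f x = Lam f (App (Lam x (App (Var f) (App (Var x) (Var x))))
                          (Lam x (App (Var f) (App (Var x) (Var x)))))"

definition is_class :: "'l trm \<Rightarrow> bool" where
  "is_class C \<longleftrightarrow> closed C \<and>
     (\<exists>f x myClass state fs. f \<noteq> x \<and> is_record fs \<and>
        C = App (Ycomb f x) (Lam myClass (Lam state (Rec fs))))"

definition is_mixin :: "'l trm \<Rightarrow> bool" where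
  "is_mixin M \<longleftrightarrow> closed M \<and>
     (\<exists>f x argClass myClass state fs. f \<noteq> x \<and> is_record fs \<and>
        M = Lam argClass (App (Ycomb f x)
              (Lam myClass (Lam state (Ext (App (Var argClass) (Var state)) fs)))))"

section \<open>Types for Lambda_R\<close>

datatype ('a, 'l) ty =
    TAtom 'a
  | TOmega
  | TArr "('a, 'l) ty" "('a, 'l) ty"
  | TInter "('a, 'l) ty" "('a, 'l) ty"
  | REmpty
  | RField 'l "('a, 'l) ty"
  | RPlus "('a, 'l) ty" "('a, 'l) ty"

text \<open>Well-formed types: is_ty = membership in T, is_rty = membership in T_R.\<close>
fun is_ty :: "('a, 'l) ty \<Rightarrow> bool" and is_rty :: "('a, 'l) ty \<Rightarrow> bool" where
  "is_ty (TAtom a) = True"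
| "is_ty TOmega = True"
| "is_ty (TArr s t) = (is_ty s \<and> is_ty t)"
| "is_ty (TInter s t) = (is_ty s \<and> is_ty t)"
| "is_ty REmpty = True"
| "is_ty (RField l s) = is_ty s"
| "is_ty (RPlus r1 r2) = (is_rty r1 \<and> is_rty r2)"
| "is_rty (TAtom a) = False"
| "is_rty TOmega = False"
| "is_rty (TArr s t) = False"
| "is_rty (TInter r1 r2) = (is_rty r1 \<and> is_rty r2)"
| "is_rty REmpty = True"
| "is_rty (RField l s) = is_ty s"
| "is_rty (RPlus r1 r2) = (is_rty r1 \<and> is_rty r2)"

fun lbl :: "('a, 'l) ty \<Rightarrow> 'l set" where
  "lbl REmpty = {}"
| "lbl (RField l s) = {l}"
| "lbl (TInter r1 r2) = lbl r1 \<union> lbl r2"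
| "lbl (RPlus r1 r2) = lbl r1 \<union> lbl r2"
| "lbl _ = {}"

text \<open>Subtyping on T: the least preorder closed under the listed rules; equations
  rho = rho' are read as the two inequalities.\<close>
inductive sub :: "('a, 'l) ty \<Rightarrow> ('a, 'l) ty \<Rightarrow> bool" where
  refl: "is_ty s \<Longrightarrow> sub s s"
| trans: "sub s t \<Longrightarrow> sub t u \<Longrightarrow> sub s u"
| omega_top: "is_ty s \<Longrightarrow> sub s TOmega"
| omega_arr: "sub TOmega (TArr TOmega TOmega)"
| inter_l: "is_ty s \<Longrightarrow> is_ty t \<Longrightarrow> sub (TInter s t) s"
| inter_r: "is_ty s \<Longrightarrow> is_ty t \<Longrightarrow> sub (TInter s t) t"
| inter_glb: "sub s t1 \<Longrightarrow> sub s t2 \<Longrightarrow> sub s (TInter t1 t2)"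
| arr_dist: "is_ty s \<Longrightarrow> is_ty t1 \<Longrightarrow> is_ty t2 \<Longrightarrow>
     sub (TInter (TArr s t1) (TArr s t2)) (TArr s (TInter t1 t2))"
| arr_mono: "sub s2 s1 \<Longrightarrow> sub t1 t2 \<Longrightarrow> sub (TArr s1 t1) (TArr s2 t2)"
| field_empty: "is_ty s \<Longrightarrow> sub (RField l s) REmpty"
| field_dist: "is_ty s \<Longrightarrow> is_ty t \<Longrightarrow>
     sub (TInter (RField l s) (RField l t)) (RField l (TInter s t))"
| field_mono: "sub s t \<Longrightarrow> sub (RField l s) (RField l t)"
| plus_empty_r1: "is_rty r \<Longrightarrow> sub (RPlus r REmpty) r"
| plus_empty_r2: "is_rty r \<Longrightarrow> sub r (RPlus r REmpty)"
| plus_empty_l1: "is_rty r \<Longrightarrow> sub (RPlus REmpty r) r"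
| plus_empty_l2: "is_rty r \<Longrightarrow> sub r (RPlus REmpty r)"
| plus_assoc1: "is_rty r1 \<Longrightarrow> is_rty r2 \<Longrightarrow> is_rty r3 \<Longrightarrow>
     sub (RPlus (RPlus r1 r2) r3) (RPlus r1 (RPlus r2 r3))"
| plus_assoc2: "is_rty r1 \<Longrightarrow> is_rty r2 \<Longrightarrow> is_rty r3 \<Longrightarrow>
     sub (RPlus r1 (RPlus r2 r3)) (RPlus (RPlus r1 r2) r3)"
| plus_inter1: "is_rty r1 \<Longrightarrow> is_rty r2 \<Longrightarrow> is_rty r3 \<Longrightarrow>
     sub (RPlus (TInter r1 r2) r3) (TInter (RPlus r1 r3) (RPlus r2 r3))"
| plus_inter2: "is_rty r1 \<Longrightarrow> is_rty r2 \<Longrightarrow> is_rty r3 \<Longrightarrow>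
     sub (TInter (RPlus r1 r3) (RPlus r2 r3)) (RPlus (TInter r1 r2) r3)"
| plus_same1: "is_ty s \<Longrightarrow> is_ty t \<Longrightarrow> is_rty r \<Longrightarrow>
     sub (RPlus (RField l s) (TInter (RField l t) r)) (TInter (RField l t) r)"
| plus_same2: "is_ty s \<Longrightarrow> is_ty t \<Longrightarrow> is_rty r \<Longrightarrow>
     sub (TInter (RField l t) r) (RPlus (RField l s) (TInter (RField l t) r))"
| plus_diff1: "l \<noteq> l' \<Longrightarrow> is_ty s \<Longrightarrow> is_ty t \<Longrightarrow> is_rty r \<Longrightarrow>
     sub (RPlus (RField l s) (TInter (RField l' t) r)) (TInter (RField l' t) (RPlus (RField l s) r))"
| plus_diff2: "l \<noteq> l' \<Longrightarrow> is_ty s \<Longrightarrow> is_ty t \<Longrightarrow> is_rty r \<Longrightarrow>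
     sub (TInter (RField l' t) (RPlus (RField l s) r)) (RPlus (RField l s) (TInter (RField l' t) r))"
| plus_mono_l: "is_rty r1 \<Longrightarrow> is_rty r2 \<Longrightarrow> is_rty r \<Longrightarrow> sub r1 r2 \<Longrightarrow>
     sub (RPlus r1 r) (RPlus r2 r)"
| plus_cong_r: "is_rty r1 \<Longrightarrow> is_rty r2 \<Longrightarrow> is_rty r \<Longrightarrow> sub r1 r2 \<Longrightarrow> sub r2 r1 \<Longrightarrow>
     sub (RPlus r r1) (RPlus r r2)"

type_synonym ('a, 'l) basis = "(var \<times> ('a, 'l) ty) set"

definition extend :: "('a, 'l) basis \<Rightarrow> var \<Rightarrow> ('a, 'l) ty \<Rightarrow> ('a, 'l) basis" where
  "extend \<Gamma> x s = insert (x, s) {p \<in> \<Gamma>. fst p \<noteq> x}"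

inductive tyass :: "('a, 'l) basis \<Rightarrow> 'l trm \<Rightarrow> ('a, 'l) ty \<Rightarrow> bool" where
  var: "(x, s) \<in> \<Gamma> \<Longrightarrow> tyass \<Gamma> (Var x) s"
| abs: "is_ty s \<Longrightarrow> tyass (extend \<Gamma> x s) M t \<Longrightarrow> tyass \<Gamma> (Lam x M) (TArr s t)"
| app: "tyass \<Gamma> M (TArr s t) \<Longrightarrow> tyass \<Gamma> N s \<Longrightarrow> tyass \<Gamma> (App M N) t"
| inter: "tyass \<Gamma> M s \<Longrightarrow> tyass \<Gamma> M t \<Longrightarrow> tyass \<Gamma> M (TInter s t)"
| omega: "tyass \<Gamma> M TOmega"
| subsum: "tyass \<Gamma> M s \<Longrightarrow> sub s t \<Longrightarrow> tyass \<Gamma> M t"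
| rec_empty: "is_record fs \<Longrightarrow> tyass \<Gamma> (Rec fs) REmpty"
| rec_field: "is_record fs \<Longrightarrow> (l, M) \<in> set fs \<Longrightarrow> tyass \<Gamma> M s \<Longrightarrow> tyass \<Gamma> (Rec fs) (RField l s)"
| sel: "tyass \<Gamma> M (RField l s) \<Longrightarrow> tyass \<Gamma> (Sel M l) s"
| ext: "is_rty r1 \<Longrightarrow> is_rty r2 \<Longrightarrow> tyass \<Gamma> M r1 \<Longrightarrow> tyass \<Gamma> (Rec fs) r2 \<Longrightarrow>
        lbl_rec fs = lbl r2 \<Longrightarrow> tyass \<Gamma> (Ext M fs) (RPlus r1 r2)"

section \<open>BCL_k(T_C)\<close>

text \<open>Type constructors: BCon None is the record constructor <<.>>, BCon (Some l) is l(.).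
  Type variables are indexed by labels (only the variables alpha_l are needed).\<close>
datatype ('a, 'l) bty =
    BAtom 'a
  | BVar 'l
  | BOmega
  | BArr "('a, 'l) bty" "('a, 'l) bty"
  | BInter "('a, 'l) bty" "('a, 'l) bty"
  | BCon "'l option" "('a, 'l) bty"

inductive bsub :: "('a, 'l) bty \<Rightarrow> ('a, 'l) bty \<Rightarrow> bool" where
  refl: "bsub s s"
| trans: "bsub s t \<Longrightarrow> bsub t u \<Longrightarrow> bsub s u"
| omega_top: "bsub s BOmega"
| omega_arr: "bsub BOmega (BArr BOmega BOmega)"
| inter_l: "bsub (BInter s t) s"
| inter_r: "bsub (BInter s t) t"
| inter_glb: "bsub s t1 \<Longrightarrow> bsub s t2 \<Longrightarrow> bsub s (BInter t1 t2)"
| arr_dist: "bsub (BInter (BArr s t1) (BArr s t2)) (BArr s (BInter t1 t2))"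
| arr_mono: "bsub s2 s1 \<Longrightarrow> bsub t1 t2 \<Longrightarrow> bsub (BArr s1 t1) (BArr s2 t2)"
| con_mono: "bsub t1 t2 \<Longrightarrow> bsub (BCon c t1) (BCon c t2)"
| con_dist: "bsub (BInter (BCon c t1) (BCon c t2)) (BCon c (BInter t1 t2))"

fun level :: "('a, 'l) bty \<Rightarrow> nat" where
  "level (BAtom a) = 0"
| "level (BVar v) = 0"
| "level BOmega = 0"
| "level (BCon c t) = Suc (level t)"
| "level (BArr s t) = Suc (max (level s) (level t))"
| "level (BInter s t) = max (level s) (level t)"

fun bsubst :: "('l \<Rightarrow> ('a, 'l) bty) \<Rightarrow> ('a, 'l) bty \<Rightarrow> ('a, 'l) bty" where
  "bsubst S (BAtom a) = BAtom a"
| "bsubst S (BVar v) = S v"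
| "bsubst S BOmega = BOmega"
| "bsubst S (BArr s t) = BArr (bsubst S s) (bsubst S t)"
| "bsubst S (BInter s t) = BInter (bsubst S s) (bsubst S t)"
| "bsubst S (BCon c t) = BCon c (bsubst S t)"

definition subst_level_le :: "('l \<Rightarrow> ('a, 'l) bty) \<Rightarrow> nat \<Rightarrow> bool" where
  "subst_level_le S k \<longleftrightarrow> (\<forall>v. S v \<noteq> BVar v \<longrightarrow> level (S v) \<le> k)"

datatype 'c comb = Cst 'c | CApp "'c comb" "'c comb"

inductive bcl :: "nat \<Rightarrow> ('c \<times> ('a, 'l) bty) set \<Rightarrow> 'c comb \<Rightarrow> ('a, 'l) bty \<Rightarrow> bool" where
  var: "(C, t) \<in> \<Delta> \<Longrightarrow> subst_level_le S k \<Longrightarrow> bcl k \<Delta> (Cst C) (bsubst S t)"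
| app: "bcl k \<Delta> E (BArr s t) \<Longrightarrow> bcl k \<Delta> E' s \<Longrightarrow> bcl k \<Delta> (CApp E E') t"
| inter: "bcl k \<Delta> E s \<Longrightarrow> bcl k \<Delta> E t \<Longrightarrow> bcl k \<Delta> E (BInter s t)"
| subsum: "bcl k \<Delta> E s \<Longrightarrow> bsub s t \<Longrightarrow> bcl k \<Delta> E t"

section \<open>Translation\<close>

text \<open>Partial translation w.r.t. the fixed finite label set L: undefined (None) on types
  containing +, and on record types mentioning a label outside L (there is no
  constructor l(.) for such labels).\<close>
fun tr :: "'l set \<Rightarrow> ('a, 'l) ty \<Rightarrow> ('a, 'l) bty option" where
  "tr L TOmega = Some BOmega"
| "tr L (TAtom a) = Some (BAtom a)"
| "tr L (TArr s t) = (case (tr L s, tr L t) of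
      (Some s', Some t') \<Rightarrow> Some (BArr s' t') | _ \<Rightarrow> None)"
| "tr L (TInter s t) = (case (tr L s, tr L t) of
      (Some s', Some t') \<Rightarrow> Some (BInter s' t') | _ \<Rightarrow> None)"
| "tr L (RField l t) = (if l \<in> L then
      (case tr L t of Some t' \<Rightarrow> Some (BCon None (BCon (Some l) t')) | None \<Rightarrow> None)
     else None)"
| "tr L REmpty = Some (BCon None BOmega)"
| "tr L (RPlus r1 r2) = None"

abbreviation trd :: "'l set \<Rightarrow> ('a, 'l) ty \<Rightarrow> bool" where
  "trd L t \<equiv> tr L t \<noteq> None"

abbreviation trt :: "'l set \<Rightarrow> ('a, 'l) ty \<Rightarrow> ('a, 'l) bty" where
  "trt L t \<equiv> the (tr L t)"

fun binters :: "('a, 'l) bty list \<Rightarrow> ('a, 'l) bty" where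
  "binters [] = BOmega"
| "binters [t] = t"
| "binters (t # ts) = BInter t (binters ts)"

definition mixin_bty ::
  "'l::linorder set \<Rightarrow> ('a, 'l) bty \<Rightarrow> ('a, 'l) bty \<Rightarrow> ('a, 'l) bty \<Rightarrow> 'l set \<Rightarrow> ('a, 'l) bty" where
  "mixin_bty L s r1 r2 LM =
     BInter (BArr (BArr s r1) (BArr s r2))
       (binters (map (\<lambda>l. BArr (BArr s (BCon None (BCon (Some l) (BVar l))))
                                (BArr s (BCon None (BCon (Some l) (BVar l)))))
                     (sorted_list_of_set (L - LM))))"

definition repo ::
  "'l::linorder set \<Rightarrow> 'l trm set \<Rightarrow> 'l trm set \<Rightarrow>
   ('l trm \<Rightarrow> ('a, 'l) ty) \<Rightarrow> ('l trm \<Rightarrow> ('a, 'l) ty) \<Rightarrow>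
   ('l trm \<Rightarrow> ('a, 'l) ty) \<Rightarrow> ('l trm \<Rightarrow> ('a, 'l) ty) \<Rightarrow> ('l trm \<Rightarrow> ('a, 'l) ty) \<Rightarrow>
   ('l trm \<times> ('a, 'l) bty) set" where
  "repo L Cs Ms sigC rhoC sigM rho1M rho2M =
     {(C, trt L (TArr (sigC C) (rhoC C))) | C. C \<in> Cs} \<union>
     {(M, mixin_bty L (trt L (sigM M)) (trt L (rho1M M)) (trt L (rho2M M)) (lbl (rho2M M))) | M. M \<in> Ms}"

definition pipe_trm :: "'l trm \<Rightarrow> 'l trm list \<Rightarrow> 'l trm" where
  "pipe_trm x fs = foldl (\<lambda>acc f. App f acc) x fs"

definition pipe_comb :: "'c comb \<Rightarrow> 'c comb list \<Rightarrow> 'c comb" where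
  "pipe_comb x fs = foldl (\<lambda>acc f. CApp f acc) x fs"

end

theory Submission
  imports Defs
begin

fun bigI :: "('a,'l) bty list \<Rightarrow> ('a,'l) bty" where
  "bigI [] = BOmega"
| "bigI (x # xs) = BInter x (bigI xs)"

lemma bsub_trans3: "bsub a b \<Longrightarrow> bsub b c \<Longrightarrow> bsub c d \<Longrightarrow> bsub a d"
  by (meson bsub.trans)

lemma bigI_lb: "x \<in> set xs \<Longrightarrow> bsub (bigI xs) x"
proof (induction xs)
  case Nil then show ?case by simp
next
  case (Cons y ys)
  then show ?case
    by (auto intro: bsub.inter_l bsub.trans[OF bsub.inter_r])
qed

lemma bigI_glb: "(\<And>x. x \<in> set xs \<Longrightarrow> bsub X x) \<Longrightarrow> bsub X (bigI xs)"
  by (induction xs) (auto intro: bsub.omega_top bsub.inter_glb)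

lemma bigI_sub: "set xs \<subseteq> set ys \<Longrightarrow> bsub (bigI ys) (bigI xs)"
  by (rule bigI_glb) (auto intro: bigI_lb)

lemma bigI_append1: "bsub (bigI (xs @ ys)) (BInter (bigI xs) (bigI ys))"
  by (intro bsub.inter_glb bigI_sub) auto

lemma bigI_append2: "bsub (BInter (bigI xs) (bigI ys)) (bigI (xs @ ys))"
  by (rule bigI_glb) (auto intro: bsub.trans[OF bsub.inter_l] bsub.trans[OF bsub.inter_r] bigI_lb)

fun arrs :: "('a,'l) bty \<Rightarrow> (('a,'l) bty \<times> ('a,'l) bty) list" where
  "arrs (BArr A B) = [(A, B)]"
| "arrs (BInter a b) = arrs a @ arrs b"
| "arrs _ = []"

definition Rres :: "('a,'l) bty \<Rightarrow> ('a,'l) bty \<Rightarrow> ('a,'l) bty" where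
  "Rres u C = bigI (map snd (filter (\<lambda>p. bsub C (fst p)) (arrs u)))"

lemma Rres_mono: "bsub s t \<Longrightarrow> bsub (Rres s C) (Rres t C)"
proof (induction rule: bsub.induct)
  case (refl s) then show ?case by (rule bsub.refl)
next
  case (trans s t u) then show ?case by (meson bsub.trans)
next
  case (omega_top s) then show ?case by (simp add: Rres_def bsub.omega_top)
next
  case omega_arr then show ?case by (simp add: Rres_def bsub.omega_top bsub.inter_glb)
next
  case (inter_l s t) then show ?case by (simp add: Rres_def) (rule bigI_sub, auto)
next
  case (inter_r s t) then show ?case by (simp add: Rres_def) (rule bigI_sub, auto)
next
  case (inter_glb s t1 t2)
  show ?case unfolding Rres_def
  proof (rule bigI_glb)
    fix x assume "x \<in> set (map snd (filter (\<lambda>p. bsub C (fst p)) (arrs (BInter t1 t2))))"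
    then have "x \<in> set (map snd (filter (\<lambda>p. bsub C (fst p)) (arrs t1))) \<or>
               x \<in> set (map snd (filter (\<lambda>p. bsub C (fst p)) (arrs t2)))" by auto
    then show "bsub (bigI (map snd (filter (\<lambda>p. bsub C (fst p)) (arrs s)))) x"
      using inter_glb.IH unfolding Rres_def by (meson bigI_lb bsub.trans)
  qed
next
  case (arr_dist s t1 t2)
  show ?case
  proof (cases "bsub C s")
    case True
    have a: "bsub (BInter t1 (BInter t2 BOmega)) t1" by (rule bsub.inter_l)
    have b: "bsub (BInter t1 (BInter t2 BOmega)) t2" by (meson bsub.inter_l bsub.inter_r bsub.trans)
    from True show ?thesis by (simp add: Rres_def) (meson a b bsub.inter_glb bsub.omega_top)
  next
    case False then show ?thesis by (simp add: Rres_def bsub.refl)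
  qed
next
  case (arr_mono s2 s1 t1 t2)
  show ?case
  proof (cases "bsub C s2")
    case True
    then have "bsub C s1" using arr_mono by (meson bsub.trans)
    then show ?thesis using True arr_mono by (auto simp: Rres_def intro!: bsub.inter_glb bsub.omega_top intro: bsub.trans[OF bsub.inter_l])
  next
    case False
    then show ?thesis by (simp add: Rres_def bsub.omega_top)
  qed
next
  case (con_mono t1 t2 c) then show ?case by (simp add: Rres_def bsub.refl)
next
  case (con_dist c t1 t2) then show ?case by (simp add: Rres_def bsub.refl)
qed

lemma beta:
  assumes "bsub (BArr A B) (BArr C D)"
  shows "bsub BOmega D \<or> (bsub C A \<and> bsub B D)"
proof -
  have r: "bsub (Rres (BArr A B) C) (Rres (BArr C D) C)" using Rres_mono[OF assms] .
  have rd: "Rres (BArr C D) C = BInter D BOmega" by (simp add: Rres_def bsub.refl)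
  show ?thesis
  proof (cases "bsub C A")
    case True
    then have "Rres (BArr A B) C = BInter B BOmega" by (simp add: Rres_def)
    then have "bsub B D" using r rd by (metis bsub.inter_l bsub.inter_glb bsub.omega_top bsub.refl bsub.trans)
    then show ?thesis using True by auto
  next
    case False
    then have "Rres (BArr A B) C = BOmega" by (simp add: Rres_def)
    then have "bsub BOmega D" using r rd by (metis bsub.inter_l bsub.trans)
    then show ?thesis by auto
  qed
qed

lemma beta_omega:
  assumes "bsub BOmega (BArr C D)" shows "bsub BOmega D"
proof -
  have "bsub (Rres BOmega C) (Rres (BArr C D) C)" using Rres_mono[OF assms] .
  then show ?thesis by (simp add: Rres_def bsub.refl) (meson bsub.inter_l bsub.trans)
qed

fun cons :: "'l option \<Rightarrow> ('a,'l) bty \<Rightarrow> ('a,'l) bty list" where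
  "cons c (BCon c' X) = (if c = c' then [X] else [])"
| "cons c (BInter a b) = cons c a @ cons c b"
| "cons c _ = []"

lemma cons_mono: "bsub s t \<Longrightarrow> (cons c t \<noteq> [] \<longrightarrow> cons c s \<noteq> []) \<and> bsub (bigI (cons c s)) (bigI (cons c t))"
proof (induction rule: bsub.induct)
  case (refl s) then show ?case by (simp add: bsub.refl)
next
  case (trans s t u) then show ?case by (meson bsub.trans)
next
  case (omega_top s) then show ?case by (simp add: bsub.omega_top)
next
  case omega_arr then show ?case by (simp add: bsub.refl)
next
  case (inter_l s t) then show ?case by (auto intro: bigI_sub)
next
  case (inter_r s t) then show ?case by (auto intro: bigI_sub)
next
  case (inter_glb s t1 t2)
  have "bsub (bigI (cons c s)) x" if "x \<in> set (cons c (BInter t1 t2))" for x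
  proof -
    from that have "x \<in> set (cons c t1) \<or> x \<in> set (cons c t2)" by auto
    then show ?thesis using inter_glb.IH by (meson bigI_lb bsub.trans)
  qed
  then show ?case using inter_glb.IH by (auto intro!: bigI_glb)
next
  case (arr_dist s t1 t2) then show ?case by (simp add: bsub.refl)
next
  case (arr_mono s2 s1 t1 t2) then show ?case by (simp add: bsub.refl)
next
  case (con_mono t1 t2 c') then show ?case by (auto intro!: bsub.inter_glb bsub.omega_top intro: bsub.trans[OF bsub.inter_l])
next
  case (con_dist c' t1 t2) then show ?case by (auto intro!: bsub.inter_glb bsub.omega_top bsub.refl intro: bsub.trans[OF bsub.inter_l] bsub.trans[OF bsub.inter_r bsub.inter_l])
qed

lemma not_omega_con: "cons c X \<noteq> [] \<Longrightarrow> \<not> bsub BOmega X"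
  using cons_mono[of BOmega X c] by auto

lemma con_inv: "bsub s (BCon c X) \<Longrightarrow> cons c s \<noteq> [] \<and> bsub (bigI (cons c s)) X"
  using cons_mono[of s "BCon c X" c] by (auto elim: bsub.trans intro: bsub.inter_l)

definition recb :: "('l::linorder \<Rightarrow> ('a,'l) bty option) \<Rightarrow> ('a,'l) bty" where
  "recb F = BInter (BCon None BOmega)
     (bigI (map (\<lambda>l. BCon None (BCon (Some l) (the (F l)))) (sorted_list_of_set (dom F))))"

definition meetF :: "('l \<Rightarrow> ('a,'l) bty option) \<Rightarrow> ('l \<Rightarrow> ('a,'l) bty option) \<Rightarrow> ('l \<Rightarrow> ('a,'l) bty option)" where
  "meetF F G = (\<lambda>l. case F l of None \<Rightarrow> G l
      | Some x \<Rightarrow> (case G l of None \<Rightarrow> Some x | Some y \<Rightarrow> Some (BInter x y)))"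

fun Nt :: "('a,'l::linorder) ty \<Rightarrow> ('a,'l) bty" and Ft :: "('a,'l) ty \<Rightarrow> 'l \<Rightarrow> ('a,'l) bty option" where
  "Nt (TAtom a) = BAtom a"
| "Nt TOmega = BOmega"
| "Nt (TArr s t) = BArr (Nt s) (Nt t)"
| "Nt (TInter s t) = BInter (Nt s) (Nt t)"
| "Nt REmpty = BCon None BOmega"
| "Nt (RField l s) = BCon None (BCon (Some l) (Nt s))"
| "Nt (RPlus a b) = recb (Ft a ++ Ft b)"
| "Ft (TInter s t) = meetF (Ft s) (Ft t)"
| "Ft (RField l s) = [l \<mapsto> Nt s]"
| "Ft (RPlus a b) = Ft a ++ Ft b"
| "Ft (TAtom a) = Map.empty"
| "Ft TOmega = Map.empty"
| "Ft (TArr s t) = Map.empty"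
| "Ft REmpty = Map.empty"

definition fle :: "('l \<Rightarrow> ('a,'l) bty option) \<Rightarrow> ('l \<Rightarrow> ('a,'l) bty option) \<Rightarrow> bool" where
  "fle F G \<longleftrightarrow> dom G \<subseteq> dom F \<and> (\<forall>l\<in>dom G. bsub (the (F l)) (the (G l)))"

lemma dom_meetF[simp]: "dom (meetF F G) = dom F \<union> dom G"
  by (auto simp: meetF_def split: option.splits)

lemma dom_Ft: "dom (Ft t) = lbl t"
  by (induction t) (auto split: if_splits)

lemma finite_lbl: "finite (lbl t)"
  by (induction t) auto

lemma finite_Ft[simp]: "finite (dom (Ft t))"
  by (simp add: dom_Ft finite_lbl)

abbreviation fld :: "'l \<Rightarrow> ('a,'l) bty \<Rightarrow> ('a,'l) bty" where
  "fld l x \<equiv> BCon None (BCon (Some l) x)"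

lemma recb_emp: "bsub (recb F) (BCon None BOmega)"
  unfolding recb_def by (rule bsub.inter_l)

lemma recb_lb: "finite (dom F) \<Longrightarrow> l \<in> dom F \<Longrightarrow> bsub (recb F) (fld l (the (F l)))"
  unfolding recb_def
  by (rule bsub.trans[OF bsub.inter_r], rule bigI_lb) auto

lemma recb_glb: "finite (dom F) \<Longrightarrow> bsub X (BCon None BOmega) \<Longrightarrow>
   (\<And>l. l \<in> dom F \<Longrightarrow> bsub X (fld l (the (F l)))) \<Longrightarrow> bsub X (recb F)"
  unfolding recb_def
  by (rule bsub.inter_glb, assumption, rule bigI_glb) auto

lemma fld_mono: "bsub x y \<Longrightarrow> bsub (fld l x) (fld l y)"
  by (intro bsub.con_mono)

lemma fld_dist: "bsub (BInter (fld l x) (fld l y)) (fld l (BInter x y))"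
  by (meson bsub.con_dist bsub.con_mono bsub.trans)

lemma fld_emp: "bsub (fld l x) (BCon None BOmega)"
  by (intro bsub.con_mono bsub.omega_top)

lemma fle_refl: "fle F F" by (auto simp: fle_def bsub.refl)

lemma fle_trans: "fle F G \<Longrightarrow> fle G H \<Longrightarrow> fle F H"
  unfolding fle_def by (meson bsub.trans domIff subset_iff)

lemma recb_mono: "finite (dom F) \<Longrightarrow> finite (dom G) \<Longrightarrow> fle F G \<Longrightarrow> bsub (recb F) (recb G)"
  apply (rule recb_glb, assumption, rule recb_emp)
  apply (rule bsub.trans[OF recb_lb fld_mono])
  apply (auto simp: fle_def)
  done

lemma recb_meet: "finite (dom F) \<Longrightarrow> finite (dom G) \<Longrightarrow>
   bsub (BInter (recb F) (recb G)) (recb (meetF F G))"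
proof (rule recb_glb)
  assume fF: "finite (dom F)" and fG: "finite (dom G)"
  then show "finite (dom (meetF F G))" by simp
  show "bsub (BInter (recb F) (recb G)) (BCon None BOmega)"
    by (rule bsub.trans[OF bsub.inter_l recb_emp])
  fix l assume l: "l \<in> dom (meetF F G)"
  show "bsub (BInter (recb F) (recb G)) (fld l (the (meetF F G l)))"
  proof (cases "F l")
    case None
    then have "l \<in> dom G" using l by auto
    then show ?thesis using None fG by (simp add: meetF_def) (rule bsub.trans[OF bsub.inter_r recb_lb])
  next
    case (Some x)
    show ?thesis
    proof (cases "G l")
      case None
      then show ?thesis using Some fF by (simp add: meetF_def) (rule bsub.trans[OF bsub.inter_l], metis domI option.sel recb_lb)
    next
      case (Some y)
      have a: "bsub (recb F) (fld l x)" using recb_lb[OF fF, of l] \<open>F l = Some x\<close> by auto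
      have b: "bsub (recb G) (fld l y)" using recb_lb[OF fG, of l] Some by auto
      have "bsub (BInter (recb F) (recb G)) (BInter (fld l x) (fld l y))"
        by (meson a b bsub.inter_glb bsub.inter_l bsub.inter_r bsub.trans)
      then show ?thesis using Some \<open>F l = Some x\<close> by (simp add: meetF_def) (meson fld_dist bsub.trans)
    qed
  qed
qed

lemma cons_bigI: "cons c (bigI xs) = concat (map (cons c) xs)"
  by (induction xs) auto

lemma field_inv:
  assumes fin: "finite (dom F)" and s: "bsub (recb F) (fld l X)"
  shows "l \<in> dom F \<and> bsub (the (F l)) X"
proof -
  define ls where "ls = sorted_list_of_set (dom F)"
  have dl: "distinct ls" and sl: "set ls = dom F" using fin by (auto simp: ls_def)
  have c1: "cons None (recb F) = BOmega # map (\<lambda>l. BCon (Some l) (the (F l))) ls"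
    by (simp add: recb_def cons_bigI ls_def comp_def)
  from con_inv[OF s] have "bsub (bigI (cons None (recb F))) (BCon (Some l) X)" by simp
  from con_inv[OF this] c1
  have ne: "cons (Some l) (BInter BOmega (bigI (map (\<lambda>l. BCon (Some l) (the (F l))) ls))) \<noteq> []"
   and sb: "bsub (bigI (cons (Some l) (BInter BOmega (bigI (map (\<lambda>l. BCon (Some l) (the (F l))) ls))))) X"
    by auto
  have cc: "cons (Some l) (BInter BOmega (bigI (map (\<lambda>l. BCon (Some l) (the (F l))) ls)))
         = map (\<lambda>l. the (F l)) (filter (\<lambda>l'. l' = l) ls)"
    by (simp add: cons_bigI) (induction ls, auto)
  from ne cc have lin: "l \<in> set ls" by (auto simp: filter_empty_conv)
  then have "filter (\<lambda>l'. l' = l) ls = [l]" using dl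
    by (induction ls) (auto simp: filter_empty_conv)
  then have "bsub (BInter (the (F l)) BOmega) X" using sb cc by simp
  then have "bsub (the (F l)) X" by (meson bsub.inter_glb bsub.omega_top bsub.refl bsub.trans)
  then show ?thesis using lin sl by auto
qed

lemma recb_inv: "finite (dom F) \<Longrightarrow> finite (dom G) \<Longrightarrow> bsub (recb F) (recb G) \<Longrightarrow> fle F G"
proof -
  assume f: "finite (dom F)" "finite (dom G)" and s: "bsub (recb F) (recb G)"
  have "l \<in> dom F \<and> bsub (the (F l)) (the (G l))" if "l \<in> dom G" for l
    using field_inv[OF f(1) bsub.trans[OF s recb_lb[OF f(2) that]]] .
  then show ?thesis unfolding fle_def by auto
qed

lemma fleI: "(\<And>l y. G l = Some y \<Longrightarrow> \<exists>x. F l = Some x \<and> bsub x y) \<Longrightarrow> fle F G"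
  unfolding fle_def by (auto simp: dom_def) (metis option.sel)

lemma fleD: "fle F G \<Longrightarrow> G l = Some y \<Longrightarrow> \<exists>x. F l = Some x \<and> bsub x y"
proof -
  assume h: "fle F G" "G l = Some y"
  then have "l \<in> dom F" "bsub (the (F l)) y" unfolding fle_def by force+
  then show ?thesis by auto
qed

lemma fle_meet_l: "fle (meetF F G) F"
  by (rule fleI) (auto simp: meetF_def bsub.refl bsub.inter_l split: option.splits)

lemma fle_meet_r: "fle (meetF F G) G"
  by (rule fleI) (auto simp: meetF_def bsub.refl bsub.inter_r split: option.splits)

lemma fle_meet_glb: "fle F G1 \<Longrightarrow> fle F G2 \<Longrightarrow> fle F (meetF G1 G2)"
proof (rule fleI)
  fix l y assume h: "fle F G1" "fle F G2" "meetF G1 G2 l = Some y"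
  show "\<exists>x. F l = Some x \<and> bsub x y"
  proof (cases "G1 l")
    case None then show ?thesis using h by (simp add: meetF_def) (metis fleD)
  next
    case (Some a)
    note a = this
    show ?thesis
    proof (cases "G2 l")
      case None then show ?thesis using h a by (simp add: meetF_def) (metis fleD)
    next
      case (Some b)
      then show ?thesis using h a fleD[OF h(1) a] fleD[OF h(2) Some]
        by (auto simp: meetF_def intro: bsub.inter_glb)
    qed
  qed
qed

lemma fle_empty: "fle F Map.empty" by (simp add: fle_def)

lemma fle_add_mono: "fle F1 F2 \<Longrightarrow> fle (F1 ++ F) (F2 ++ F)"
  by (rule fleI) (auto simp: map_add_def bsub.refl split: option.splits dest: fleD)

lemma fle_add_cong: "fle G1 G2 \<Longrightarrow> fle G2 G1 \<Longrightarrow> fle (F ++ G1) (F ++ G2)"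
proof (rule fleI)
  fix l y assume h: "fle G1 G2" "fle G2 G1" "(F ++ G2) l = Some y"
  show "\<exists>x. (F ++ G1) l = Some x \<and> bsub x y"
  proof (cases "G2 l")
    case None
    then have "G1 l = None" using fleD[OF h(2)] by (metis option.exhaust option.simps(3))
    then show ?thesis using None h(3) by (simp add: map_add_def bsub.refl)
  next
    case (Some b)
    then show ?thesis using fleD[OF h(1) Some] h(3) by (auto simp: map_add_def)
  qed
qed

lemma fle_pi1: "fle (meetF F1 F2 ++ F3) (meetF (F1 ++ F3) (F2 ++ F3))"
  by (rule fleI) (auto simp: map_add_def meetF_def bsub.refl bsub.inter_l bsub.inter_r
    intro: bsub.inter_glb split: option.splits)

lemma fle_pi2: "fle (meetF (F1 ++ F3) (F2 ++ F3)) (meetF F1 F2 ++ F3)"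
  by (rule fleI) (auto simp: map_add_def meetF_def bsub.refl bsub.inter_l bsub.inter_r
    intro: bsub.inter_glb split: option.splits)

lemma EQ: "is_rty r \<Longrightarrow> bsub (Nt r) (recb (Ft r)) \<and> bsub (recb (Ft r)) (Nt r)"
proof (induction r)
  case REmpty
  then show ?case by (simp add: recb_def bsub.inter_l bsub.inter_glb bsub.refl bsub.omega_top)
next
  case (RField l s)
  have "bsub (Nt (RField l s)) (recb (Ft (RField l s)))"
    by (rule recb_glb) (auto intro: fld_emp bsub.refl)
  moreover have "bsub (recb (Ft (RField l s))) (Nt (RField l s))"
    using recb_lb[of "[l \<mapsto> Nt s]" l] by simp
  ultimately show ?case by blast
next
  case (TInter r1 r2)
  then have h1: "bsub (Nt r1) (recb (Ft r1)) \<and> bsub (recb (Ft r1)) (Nt r1)"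
        and h2: "bsub (Nt r2) (recb (Ft r2)) \<and> bsub (recb (Ft r2)) (Nt r2)" by auto
  have "bsub (BInter (Nt r1) (Nt r2)) (BInter (recb (Ft r1)) (recb (Ft r2)))"
    using h1 h2 by (meson bsub.inter_glb bsub.inter_l bsub.inter_r bsub.trans)
  then have a: "bsub (Nt (TInter r1 r2)) (recb (Ft (TInter r1 r2)))"
    using recb_meet[of "Ft r1" "Ft r2"] by (auto intro: bsub.trans)
  have "bsub (recb (meetF (Ft r1) (Ft r2))) (recb (Ft r1))"
    by (rule recb_mono) (auto intro: fle_meet_l)
  moreover have "bsub (recb (meetF (Ft r1) (Ft r2))) (recb (Ft r2))"
    by (rule recb_mono) (auto intro: fle_meet_r)
  ultimately have b: "bsub (recb (Ft (TInter r1 r2))) (Nt (TInter r1 r2))"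
    using h1 h2 by (auto intro: bsub.inter_glb bsub.trans)
  show ?case using a b by simp
qed (auto simp: bsub.refl)

lemma map_same: "[l \<mapsto> a] ++ meetF [l \<mapsto> b] G = meetF [l \<mapsto> b] G"
  unfolding fun_eq_iff by (auto simp: map_add_def meetF_def split: option.splits)

lemma map_diff: "l \<noteq> l' \<Longrightarrow> [l \<mapsto> a] ++ meetF [l' \<mapsto> b] G = meetF [l' \<mapsto> b] ([l \<mapsto> a] ++ G)"
  unfolding fun_eq_iff by (auto simp: map_add_def meetF_def split: option.splits)

lemma map_dist: "meetF [l \<mapsto> x] [l \<mapsto> y] = [l \<mapsto> BInter x y]"
  unfolding fun_eq_iff by (auto simp: meetF_def)

lemma sub_N: "sub s t \<Longrightarrow> bsub (Nt s) (Nt t) \<and> fle (Ft s) (Ft t)"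
proof (induction rule: sub.induct)
  case (refl s) then show ?case by (simp add: bsub.refl fle_refl)
next
  case (trans s t u) then show ?case by (meson bsub.trans fle_trans)
next
  case (omega_top s)
  then show ?case by (simp add: bsub.omega_top fle_empty)
next
  case omega_arr then show ?case by (simp add: bsub.omega_arr fle_refl)
next
  case (inter_l s t) then show ?case by (simp add: bsub.inter_l fle_meet_l)
next
  case (inter_r s t) then show ?case by (simp add: bsub.inter_r fle_meet_r)
next
  case (inter_glb s t1 t2) then show ?case by (simp add: bsub.inter_glb fle_meet_glb)
next
  case (arr_dist s t1 t2) then show ?case by (simp add: bsub.arr_dist fle_empty)
next
  case (arr_mono s2 s1 t1 t2) then show ?case by (simp add: bsub.arr_mono fle_refl)
next
  case (field_empty s l) then show ?case by (simp add: fld_emp fle_empty)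
next
  case (field_dist s t l)
  then show ?case by (simp add: fld_dist map_dist fle_refl)
next
  case (field_mono s t l) then show ?case by (auto simp: fld_mono intro!: fleI split: if_splits)
next
  case (plus_empty_r1 r) then show ?case using EQ[OF plus_empty_r1] by (simp add: fle_refl)
next
  case (plus_empty_r2 r) then show ?case using EQ[OF plus_empty_r2] by (simp add: fle_refl)
next
  case (plus_empty_l1 r) then show ?case using EQ[OF plus_empty_l1] by (simp add: fle_refl)
next
  case (plus_empty_l2 r) then show ?case using EQ[OF plus_empty_l2] by (simp add: fle_refl)
next
  case (plus_assoc1 r1 r2 r3) then show ?case by (simp add: bsub.refl fle_refl)
next
  case (plus_assoc2 r1 r2 r3) then show ?case by (simp add: bsub.refl fle_refl)
next
  case (plus_inter1 r1 r2 r3)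
  have a: "bsub (recb (meetF (Ft r1) (Ft r2) ++ Ft r3)) (recb (Ft r1 ++ Ft r3))"
    by (rule recb_mono) (auto intro: fle_add_mono fle_meet_l)
  have b: "bsub (recb (meetF (Ft r1) (Ft r2) ++ Ft r3)) (recb (Ft r2 ++ Ft r3))"
    by (rule recb_mono) (auto intro: fle_add_mono fle_meet_r)
  show ?case using a b by (simp add: bsub.inter_glb fle_pi1)
next
  case (plus_inter2 r1 r2 r3)
  have a: "bsub (BInter (recb (Ft r1 ++ Ft r3)) (recb (Ft r2 ++ Ft r3)))
              (recb (meetF (Ft r1 ++ Ft r3) (Ft r2 ++ Ft r3)))"
    by (rule recb_meet) auto
  have b: "bsub (recb (meetF (Ft r1 ++ Ft r3) (Ft r2 ++ Ft r3))) (recb (meetF (Ft r1) (Ft r2) ++ Ft r3))"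
    by (rule recb_mono) (auto intro: fle_pi2)
  show ?case using a b by (simp add: fle_pi2) (meson bsub.trans)
next
  case (plus_same1 s t r l)
  have "is_rty (TInter (RField l t) r)" using plus_same1 by simp
  from EQ[OF this] show ?case by (simp add: map_same fle_refl)
next
  case (plus_same2 s t r l)
  have "is_rty (TInter (RField l t) r)" using plus_same2 by simp
  from EQ[OF this] show ?case by (simp add: map_same fle_refl)
next
  case (plus_diff1 l l' s t r)
  have "is_rty (TInter (RField l' t) (RPlus (RField l s) r))" using plus_diff1 by simp
  from EQ[OF this] plus_diff1(1) show ?case by (simp add: map_diff fle_refl)
next
  case (plus_diff2 l l' s t r)
  have "is_rty (TInter (RField l' t) (RPlus (RField l s) r))" using plus_diff2 by simp
  from EQ[OF this] plus_diff2(1) show ?case by (simp add: map_diff fle_refl)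
next
  case (plus_mono_l r1 r2 r)
  then have "fle (Ft r1 ++ Ft r) (Ft r2 ++ Ft r)" by (simp add: fle_add_mono)
  then show ?case by (simp add: recb_mono)
next
  case (plus_cong_r r1 r2 r)
  then have "fle (Ft r ++ Ft r1) (Ft r ++ Ft r2)" by (simp add: fle_add_cong)
  then show ?case by (simp add: recb_mono)
qed

lemma tr_N: "tr L t = Some b \<Longrightarrow> b = Nt t"
  by (induction t arbitrary: b) (auto split: option.splits if_splits)

lemma tr_lbl: "tr L t \<noteq> None \<Longrightarrow> lbl t \<subseteq> L"
  by (induction t) (auto split: option.splits if_splits)

lemma tr_level: "tr L r \<noteq> None \<Longrightarrow> Ft r l = Some x \<Longrightarrow> level x < level (Nt r)"
proof (induction r arbitrary: x)
  case (TInter r1 r2)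
  then show ?case
    by (auto simp: meetF_def split: option.splits if_splits)
qed (auto split: option.splits if_splits)

fun novar :: "('a,'l) bty \<Rightarrow> bool" where
  "novar (BVar v) = False"
| "novar (BArr s t) = (novar s \<and> novar t)"
| "novar (BInter s t) = (novar s \<and> novar t)"
| "novar (BCon c t) = novar t"
| "novar _ = True"

lemma novar_subst: "novar b \<Longrightarrow> bsubst S b = b"
  by (induction b) auto

lemma tr_novar: "tr L t = Some b \<Longrightarrow> novar b"
  by (induction t arbitrary: b) (auto split: option.splits if_splits)

lemma bsubst_id: "bsubst BVar t = t"
  by (induction t) auto

lemma bsubst_binters: "bsubst S (binters xs) = binters (map (bsubst S) xs)"
  by (induction xs rule: binters.induct) auto

lemma binters_lb: "x \<in> set xs \<Longrightarrow> bsub (binters xs) x"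
  by (induction xs rule: binters.induct) (auto intro: bsub.refl bsub.inter_l bsub.trans[OF bsub.inter_r])

lemma rty_cons: "is_rty r \<Longrightarrow> cons None (Nt r) \<noteq> []"
  by (induction r) (auto simp: recb_def)

lemma rty_not_omega: "is_rty r \<Longrightarrow> \<not> bsub BOmega (Nt r)"
  using rty_cons not_omega_con by blast

lemma arr_glb_list: "(\<And>y. y \<in> set ys \<Longrightarrow> bsub X (BArr A y)) \<Longrightarrow> bsub X (BArr A (bigI ys))"
proof (induction ys)
  case Nil
  have "bsub BOmega (BArr A BOmega)"
    by (meson bsub.arr_mono bsub.omega_arr bsub.omega_top bsub.refl bsub.trans)
  then show ?case by (simp add: bsub.omega_top bsub.trans[OF bsub.omega_top])
next
  case (Cons y ys)
  then have "bsub X (BInter (BArr A y) (BArr A (bigI ys)))" by (simp add: bsub.inter_glb)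
  then show ?case by (simp add: bsub.arr_dist bsub.trans)
qed

lemma omega_inter: "\<not> bsub BOmega (BInter a b) \<Longrightarrow> \<not> bsub BOmega a \<or> \<not> bsub BOmega b"
  using bsub.inter_glb by blast

lemma varlemma:
  fixes \<Gamma> :: "('a, 'l::linorder) basis"
  shows "tyass \<Gamma> E \<tau> \<Longrightarrow> E = Var x \<Longrightarrow> \<not> bsub BOmega (Nt \<tau>) \<Longrightarrow>
    (\<forall>x T1 T2. (x,T1)\<in>\<Gamma> \<longrightarrow> (x,T2)\<in>\<Gamma> \<longrightarrow> T1 = T2) \<Longrightarrow> \<exists>T. (x,T)\<in>\<Gamma> \<and> bsub (Nt T) (Nt \<tau>)"
proof (induction rule: tyass.induct)
  case (var x s \<Gamma>) then show ?case by (auto intro: bsub.refl)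
next
  case (inter \<Gamma> M s t)
  then have "\<not> bsub BOmega (Nt s) \<or> \<not> bsub BOmega (Nt t)" using omega_inter by (metis Nt.simps(4))
  then show ?case
  proof
    assume ns: "\<not> bsub BOmega (Nt s)"
    with inter obtain T where T: "(x,T)\<in>\<Gamma>" "bsub (Nt T) (Nt s)" by auto
    have "bsub (Nt T) (Nt t)"
    proof (cases "bsub BOmega (Nt t)")
      case True then show ?thesis by (meson bsub.omega_top bsub.trans)
    next
      case False
      with inter obtain T' where "(x,T')\<in>\<Gamma>" "bsub (Nt T') (Nt t)" by blast
      moreover have "T' = T" using inter.prems(3) \<open>(x,T')\<in>\<Gamma>\<close> T(1) by blast
      ultimately show ?thesis by simp
    qed
    then show ?thesis using T by (auto intro: bsub.inter_glb)
  next
    assume ns: "\<not> bsub BOmega (Nt t)"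
    with inter obtain T where T: "(x,T)\<in>\<Gamma>" "bsub (Nt T) (Nt t)" by auto
    have "bsub (Nt T) (Nt s)"
    proof (cases "bsub BOmega (Nt s)")
      case True then show ?thesis by (meson bsub.omega_top bsub.trans)
    next
      case False
      with inter obtain T' where "(x,T')\<in>\<Gamma>" "bsub (Nt T') (Nt s)" by blast
      moreover have "T' = T" using inter.prems(3) \<open>(x,T')\<in>\<Gamma>\<close> T(1) by blast
      ultimately show ?thesis by simp
    qed
    then show ?thesis using T by (auto intro: bsub.inter_glb)
  qed
next
  case (omega \<Gamma> M) then show ?case by (simp add: bsub.refl)
next
  case (subsum \<Gamma> M s t)
  from sub_N[OF subsum(2)] have st: "bsub (Nt s) (Nt t)" by simp
  then have "\<not> bsub BOmega (Nt s)" using subsum(5) bsub.trans by blast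
  with subsum obtain T where "(x,T)\<in>\<Gamma>" "bsub (Nt T) (Nt s)" by blast
  then show ?case using st by (meson bsub.trans)
qed auto

lemma key:
  fixes L :: "'l::linorder set" and \<Delta> :: "('c \<times> ('a,'l) bty) set"
  assumes bcl0: "bcl k \<Delta> E0 (BArr \<sigma>0 (recb F0))"
    and finF0: "finite (dom F0)" and lvF0: "\<forall>l x. F0 l = Some x \<longrightarrow> level x \<le> k"
    and c1: "bsub (BArr \<sigma>0 (recb F0)) (BArr sM (BInter (Nt rp) r1))"
    and c2: "bsub (BArr sM (recb (Ft rp ++ Ft r2))) Tau"
    and MD: "(M, mixin_bty L sM r1 (Nt r2) (lbl r2)) \<in> \<Delta>"
    and rp: "is_rty rp" "lbl rp \<subseteq> L" and r1: "\<not> bsub BOmega r1" and r2: "is_rty r2"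
    and finL: "finite L"
    and nv: "novar sM" "novar r1" "novar (Nt r2)"
  shows "bcl k \<Delta> (CApp (Cst M) E0) (BArr sM (recb ((F0 |` (L - lbl r2)) ++ Ft r2)))
       \<and> bsub (BArr sM (recb ((F0 |` (L - lbl r2)) ++ Ft r2))) Tau"
proof -
  define LM where "LM = lbl r2"
  define F1 where "F1 = (F0 |` (L - LM)) ++ Ft r2"
  define P0 where "P0 = BArr \<sigma>0 (recb F0)"
  have nom: "\<not> bsub BOmega (BInter (Nt rp) r1)"
    using r1 by (meson bsub.inter_r bsub.trans)
  from beta[OF c1] nom have sM: "bsub sM \<sigma>0" and rF: "bsub (recb F0) (BInter (Nt rp) r1)" by auto
  have rF1: "bsub (recb F0) r1" using rF by (meson bsub.inter_r bsub.trans)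
  have "bsub (recb F0) (recb (Ft rp))"
    using rF EQ[OF rp(1)] by (meson bsub.inter_l bsub.trans)
  then have fleF0: "fle F0 (Ft rp)" by (rule recb_inv[OF finF0 finite_Ft])
  define S where "S = (\<lambda>l. case F0 l of None \<Rightarrow> BVar l | Some x \<Rightarrow> x)"
  have slv: "subst_level_le S k"
    unfolding subst_level_le_def S_def using lvF0 by (auto split: option.splits)
  define ls0 where "ls0 = sorted_list_of_set (L - LM)"
  define T' where "T' = BInter (BArr (BArr sM r1) (BArr sM (Nt r2)))
     (binters (map (\<lambda>l. BArr (BArr sM (fld l (S l))) (BArr sM (fld l (S l)))) ls0))"
  have bT: "bsubst S (mixin_bty L sM r1 (Nt r2) LM) = T'"
    unfolding T'_def mixin_bty_def ls0_def
    by (simp add: bsubst_binters novar_subst nv comp_def)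
  have bclM: "bcl k \<Delta> (Cst M) T'"
    using bcl.var[OF MD[folded LM_def] slv] bT by simp
  define ls where "ls = sorted_list_of_set (dom F0 \<inter> (L - LM))"
  have sls: "set ls = dom F0 \<inter> (L - LM)" unfolding ls_def using finF0 by simp
  define Ys where "Ys = BArr sM (Nt r2) # map (\<lambda>l. BArr sM (fld l (the (F0 l)))) ls"
  define Zs where "Zs = Nt r2 # map (\<lambda>l. fld l (the (F0 l))) ls"
  have P0a: "bsub P0 (BArr sM r1)" unfolding P0_def by (rule bsub.arr_mono[OF sM rF1])
  have "bsub T' (BArr P0 y)" if "y \<in> set Ys" for y
  proof -
    from that have "y = BArr sM (Nt r2) \<or> (\<exists>l\<in>set ls. y = BArr sM (fld l (the (F0 l))))"
      unfolding Ys_def by auto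
    then show ?thesis
    proof
      assume y: "y = BArr sM (Nt r2)"
      have "bsub (BArr (BArr sM r1) (BArr sM (Nt r2))) (BArr P0 y)"
        using y P0a by (simp add: bsub.arr_mono bsub.refl)
      then show ?thesis unfolding T'_def by (meson bsub.inter_l bsub.trans)
    next
      assume "\<exists>l\<in>set ls. y = BArr sM (fld l (the (F0 l)))"
      then obtain l where l: "l \<in> set ls" and y: "y = BArr sM (fld l (the (F0 l)))" by blast
      from l sls have ld: "l \<in> dom F0" and lL: "l \<in> L - LM" by auto
      have Sl: "S l = the (F0 l)" using ld by (auto simp: S_def)
      have inl: "l \<in> set ls0" using lL finL by (simp add: ls0_def)
      have a: "bsub T' (BArr (BArr sM (fld l (S l))) (BArr sM (fld l (S l))))"
        unfolding T'_def
        by (rule bsub.trans[OF bsub.inter_r binters_lb]) (use inl in auto)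
      have "bsub P0 (BArr sM (fld l (the (F0 l))))"
        unfolding P0_def by (rule bsub.arr_mono[OF sM recb_lb[OF finF0 ld]])
      then have "bsub (BArr (BArr sM (fld l (S l))) (BArr sM (fld l (S l)))) (BArr P0 y)"
        using y Sl by (simp add: bsub.arr_mono bsub.refl)
      then show ?thesis using a by (meson bsub.trans)
    qed
  qed
  then have t1: "bsub T' (BArr P0 (bigI Ys))" by (rule arr_glb_list)
  have t2: "bsub (bigI Ys) (BArr sM (bigI Zs))"
    by (rule arr_glb_list, rule bigI_lb) (auto simp: Ys_def Zs_def)
  have finF1: "finite (dom F1)" unfolding F1_def using finF0 by auto
  have Zr2: "bsub (bigI Zs) (recb (Ft r2))"
  proof -
    have "bsub (bigI Zs) (Nt r2)" unfolding Zs_def by (simp add: bsub.inter_l)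
    then show ?thesis using EQ[OF r2] by (meson bsub.trans)
  qed
  have t3: "bsub (bigI Zs) (recb F1)"
  proof (rule recb_glb[OF finF1])
    show "bsub (bigI Zs) (BCon None BOmega)" using Zr2 recb_emp bsub.trans by blast
    fix l assume l: "l \<in> dom F1"
    show "bsub (bigI Zs) (fld l (the (F1 l)))"
    proof (cases "l \<in> dom (Ft r2)")
      case True
      then have "F1 l = Ft r2 l" unfolding F1_def by (auto simp: map_add_def split: option.splits)
      then show ?thesis using Zr2 recb_lb[OF finite_Ft True] by (metis bsub.trans)
    next
      case False
      then have F1l: "F1 l = (F0 |` (L - LM)) l" unfolding F1_def by (auto simp: map_add_def split: option.splits)
      with l have "l \<in> dom F0 \<inter> (L - LM)" by (auto simp: restrict_map_def split: if_splits) (metis domI)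
      then have "fld l (the (F0 l)) \<in> set Zs" using sls unfolding Zs_def by auto
      moreover have "the (F1 l) = the (F0 l)" using F1l \<open>l \<in> dom F0 \<inter> (L - LM)\<close> by auto
      ultimately show ?thesis by (simp add: bigI_lb)
    qed
  qed
  have "bsub T' (BArr P0 (BArr sM (recb F1)))"
    using t1 t2 t3 by (meson bsub.arr_mono bsub.refl bsub.trans)
  then have b1: "bcl k \<Delta> (CApp (Cst M) E0) (BArr sM (recb F1))"
    using bclM bcl0 unfolding P0_def by (meson bcl.app bcl.subsum)
  have "fle F1 (Ft rp ++ Ft r2)"
  proof (rule fleI)
    fix l y assume h: "(Ft rp ++ Ft r2) l = Some y"
    show "\<exists>x. F1 l = Some x \<and> bsub x y"
    proof (cases "Ft r2 l")
      case (Some z)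
      then show ?thesis using h by (auto simp: F1_def bsub.refl)
    next
      case None
      then have rpl: "Ft rp l = Some y" using h by (auto simp: map_add_def)
      then have "l \<in> L" using rp(2) dom_Ft[of rp] by auto
      moreover have "l \<notin> LM" using None dom_Ft[of r2] unfolding LM_def by auto
      moreover obtain x where "F0 l = Some x" "bsub x y" using fleD[OF fleF0 rpl] by blast
      ultimately show ?thesis using None by (auto simp: F1_def map_add_def)
    qed
  qed
  note fl = this
  have "bsub (recb F1) (recb (Ft rp ++ Ft r2))"
    by (rule recb_mono[OF finF1 _ fl]) (simp add: dom_map_add)
  then have "bsub (BArr sM (recb F1)) Tau" using c2 by (meson bsub.arr_mono bsub.refl bsub.trans)
  with b1 show ?thesis unfolding F1_def LM_def by simp
qed

lemma step:
  fixes \<Gamma>0 :: "('a,'l::linorder) basis"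
  assumes U: "\<forall>x T1 T2. (x,T1)\<in>\<Gamma>0 \<longrightarrow> (x,T2)\<in>\<Gamma>0 \<longrightarrow> T1 = T2"
  and xT: "\<And>T. (x,T) \<in> \<Gamma>0 \<Longrightarrow> T = TArr (TArr sM (TInter rp r1)) (TArr sM (RPlus rp r2))"
  and IH0: "\<And>\<tau>. tyass \<Gamma>0 E0 \<tau> \<Longrightarrow> \<not> bsub BOmega (Nt \<tau>) \<Longrightarrow> bcl k \<Delta> E0' P0 \<and> bsub P0 (Nt \<tau>)"
  and KEY: "\<And>\<tau>. bcl k \<Delta> E0' P0 \<Longrightarrow> bsub P0 (BArr (Nt sM) (BInter (Nt rp) (Nt r1))) \<Longrightarrow>
       bsub (BArr (Nt sM) (recb (Ft rp ++ Ft r2))) (Nt \<tau>) \<Longrightarrow> bcl k \<Delta> E1' P1 \<and> bsub P1 (Nt \<tau>)"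
  and r1: "is_rty r1"
  shows "tyass \<Gamma> E \<tau> \<Longrightarrow> \<Gamma> = \<Gamma>0 \<Longrightarrow> E = App (Var x) E0 \<Longrightarrow> \<not> bsub BOmega (Nt \<tau>) \<Longrightarrow>
     bcl k \<Delta> E1' P1 \<and> bsub P1 (Nt \<tau>)"
proof (induction rule: tyass.induct)
  case (app \<Gamma> M s t N)
  then have M: "M = Var x" and N: "N = E0" and G: "\<Gamma> = \<Gamma>0" by auto
  have nt: "\<not> bsub BOmega (Nt t)" by fact
  then have nst: "\<not> bsub BOmega (Nt (TArr s t))" using beta_omega by (metis Nt.simps(3))
  obtain T where T: "(x,T) \<in> \<Gamma>0" "bsub (Nt T) (Nt (TArr s t))"
    using varlemma[OF app(1)[unfolded M G] HOL.refl nst] U by blast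
  have "bsub (BArr (BArr (Nt sM) (BInter (Nt rp) (Nt r1))) (BArr (Nt sM) (recb (Ft rp ++ Ft r2))))
             (BArr (Nt s) (Nt t))"
    using T xT[OF T(1)] by simp
  from beta[OF this] nt
  have s1: "bsub (Nt s) (BArr (Nt sM) (BInter (Nt rp) (Nt r1)))"
   and s2: "bsub (BArr (Nt sM) (recb (Ft rp ++ Ft r2))) (Nt t)" by auto
  have "\<not> bsub BOmega (Nt s)"
  proof
    assume "bsub BOmega (Nt s)"
    then have "bsub BOmega (BInter (Nt rp) (Nt r1))" using s1 beta_omega bsub.trans by blast
    then have "bsub BOmega (Nt r1)" by (meson bsub.inter_r bsub.trans)
    then show False using rty_not_omega[OF r1] by simp
  qed
  then have "bcl k \<Delta> E0' P0 \<and> bsub P0 (Nt s)" using IH0 app(2)[unfolded N G] by blast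
  then show ?case using KEY s1 s2 by (meson bsub.trans)
next
  case (inter \<Gamma> M s t)
  then have "\<not> bsub BOmega (Nt s) \<or> \<not> bsub BOmega (Nt t)" using omega_inter by (metis Nt.simps(4))
  then show ?case
  proof
    assume ns: "\<not> bsub BOmega (Nt s)"
    with inter have a: "bcl k \<Delta> E1' P1" "bsub P1 (Nt s)" by auto
    have "bsub P1 (Nt t)"
    proof (cases "bsub BOmega (Nt t)")
      case True then show ?thesis by (meson bsub.omega_top bsub.trans)
    next
      case False with inter show ?thesis by auto
    qed
    then show ?thesis using a by (auto intro: bsub.inter_glb)
  next
    assume ns: "\<not> bsub BOmega (Nt t)"
    with inter have a: "bcl k \<Delta> E1' P1" "bsub P1 (Nt t)" by auto
    have "bsub P1 (Nt s)"
    proof (cases "bsub BOmega (Nt s)")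
      case True then show ?thesis by (meson bsub.omega_top bsub.trans)
    next
      case False with inter show ?thesis by auto
    qed
    then show ?thesis using a by (auto intro: bsub.inter_glb)
  qed
next
  case (omega \<Gamma> M) then show ?case by (simp add: bsub.refl)
next
  case (subsum \<Gamma> M s t)
  from sub_N[OF subsum(2)] have st: "bsub (Nt s) (Nt t)" by simp
  then have "\<not> bsub BOmega (Nt s)" using subsum(6) bsub.trans by blast
  with subsum have "bcl k \<Delta> E1' P1 \<and> bsub P1 (Nt s)" by blast
  then show ?case using st by (meson bsub.trans)
qed auto

theorem theorem5p5:
  fixes L :: "'l::linorder set" and Cs Ms :: "'l trm set"
    and sigC rhoC sigM rho1M rho2M :: "'l trm \<Rightarrow> ('a, 'l) ty"
    and xC :: "'l trm \<Rightarrow> var" and xM :: "'l trm \<Rightarrow> ('a, 'l) ty \<Rightarrow> var"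
    and \<Gamma> :: "('a, 'l) basis" and \<sigma> \<rho> :: "('a, 'l) ty"
    and ms :: "('l trm \<times> ('a, 'l) ty) list" and C :: "'l trm"
  assumes finL: "finite L" and finC: "finite Cs" and finM: "finite Ms"
    and classes: "\<forall>C\<in>Cs. is_class C \<and> is_ty (sigC C) \<and> is_rty (rhoC C)
                     \<and> trd L (TArr (sigC C) (rhoC C))
                     \<and> tyass {} C (TArr (sigC C) (rhoC C))"
    and mixins: "\<forall>M\<in>Ms. is_mixin M \<and> is_ty (sigM M) \<and> is_rty (rho1M M) \<and> is_rty (rho2M M)
                     \<and> trd L (sigM M) \<and> trd L (rho1M M) \<and> trd L (rho2M M)
                     \<and> (\<forall>\<rho>'. is_rty \<rho>' \<longrightarrow>
                          tyass {} M (TArr (TArr (sigM M) (TInter \<rho>' (rho1M M)))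
                                         (TArr (sigM M) (RPlus \<rho>' (rho2M M)))))
                     \<and> lbl (rho2M M) \<subseteq> L \<and> lbl (rho2M M) \<noteq> {}"
    and xC_inj: "inj_on xC Cs"
    and xM_inj: "inj_on (\<lambda>(M, \<rho>'). xM M \<rho>') {(M, \<rho>'). M \<in> Ms \<and> is_rty \<rho>' \<and> trd L \<rho>'}"
    and x_disj: "\<forall>C'\<in>Cs. \<forall>M\<in>Ms. \<forall>\<rho>'. is_rty \<rho>' \<and> trd L \<rho>' \<longrightarrow> xC C' \<noteq> xM M \<rho>'"
    and finG: "finite \<Gamma>"
    and Gamma: "\<Gamma> \<subseteq> {(xC C', TArr (sigC C') (rhoC C')) | C'. C' \<in> Cs}
                  \<union> {(xM M \<rho>', TArr (TArr (sigM M) (TInter \<rho>' (rho1M M)))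
                                     (TArr (sigM M) (RPlus \<rho>' (rho2M M))))
                      | M \<rho>'. M \<in> Ms \<and> is_rty \<rho>' \<and> trd L \<rho>'}"
    and sig: "is_ty \<sigma>" and rho: "is_rty \<rho>" and tr_def: "trd L (TArr \<sigma> \<rho>)"
    and ms: "\<forall>(M, \<rho>')\<in>set ms. M \<in> Ms \<and> is_rty \<rho>' \<and> trd L \<rho>'"
    and C: "C \<in> Cs"
    and typed: "tyass \<Gamma> (pipe_trm (Var (xC C)) (map (\<lambda>(M, \<rho>'). Var (xM M \<rho>')) ms)) (TArr \<sigma> \<rho>)"
  shows "bcl (Max ((\<lambda>C'. level (trt L (rhoC C'))) ` Cs
                   \<union> (\<lambda>M. level (trt L (rho2M M))) ` Ms
                   \<union> {level (trt L \<rho>)}))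
             (repo L Cs Ms sigC rhoC sigM rho1M rho2M)
             (pipe_comb (Cst C) (map (\<lambda>(M, \<rho>'). Cst M) ms))
             (trt L (TArr \<sigma> \<rho>))"
proof -
  define k where "k = Max ((\<lambda>C'. level (trt L (rhoC C'))) ` Cs
                   \<union> (\<lambda>M. level (trt L (rho2M M))) ` Ms
                   \<union> {level (trt L \<rho>)})"
  define \<Delta> where "\<Delta> = repo L Cs Ms sigC rhoC sigM rho1M rho2M"
  have finK: "finite ((\<lambda>C'. level (trt L (rhoC C'))) ` Cs
                   \<union> (\<lambda>M. level (trt L (rho2M M))) ` Ms
                   \<union> {level (trt L \<rho>)})" using finC finM by simp
  have trNC: "tr L (TArr (sigC C') (rhoC C')) = Some (Nt (TArr (sigC C') (rhoC C')))" if "C' \<in> Cs" for C'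
    using classes that tr_N by (metis option.exhaust)
  have trC2: "tr L (rhoC C') = Some (Nt (rhoC C'))" if "C' \<in> Cs" for C'
    using trNC[OF that] by (auto split: option.splits)
  have trM: "tr L (sigM M) = Some (Nt (sigM M)) \<and> tr L (rho1M M) = Some (Nt (rho1M M))
       \<and> tr L (rho2M M) = Some (Nt (rho2M M))" if "M \<in> Ms" for M
    using mixins that tr_N by (metis option.exhaust)
  have kC: "level (Nt (rhoC C')) \<le> k" if "C' \<in> Cs" for C'
  proof -
    have "level (trt L (rhoC C')) \<le> k" unfolding k_def using that by (intro Max_ge[OF finK]) blast
    then show ?thesis using trC2[OF that] by simp
  qed
  have kM: "level (Nt (rho2M M)) \<le> k" if "M \<in> Ms" for M
  proof -
    have "level (trt L (rho2M M)) \<le> k" unfolding k_def using that by (intro Max_ge[OF finK]) blast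
    then show ?thesis using trM[OF that] by simp
  qed
  have DC: "(C', BArr (Nt (sigC C')) (Nt (rhoC C'))) \<in> \<Delta>" if "C' \<in> Cs" for C'
    unfolding \<Delta>_def repo_def using trNC[OF that] that by auto
  have DM: "(M, mixin_bty L (Nt (sigM M)) (Nt (rho1M M)) (Nt (rho2M M)) (lbl (rho2M M))) \<in> \<Delta>"
    if "M \<in> Ms" for M
    unfolding \<Delta>_def repo_def using trM[OF that] that by auto
  define MT where "MT = (\<lambda>M \<rho>'. TArr (TArr (sigM M) (TInter \<rho>' (rho1M M)))
                                     (TArr (sigM M) (RPlus \<rho>' (rho2M M))))"
  have Gcases: "\<And>y T. (y,T) \<in> \<Gamma> \<Longrightarrow> (\<exists>C'. C' \<in> Cs \<and> y = xC C' \<and> T = TArr (sigC C') (rhoC C'))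
       \<or> (\<exists>M \<rho>'. M \<in> Ms \<and> is_rty \<rho>' \<and> trd L \<rho>' \<and> y = xM M \<rho>' \<and> T = MT M \<rho>')"
  proof -
    fix y T assume h: "(y,T) \<in> \<Gamma>"
    have "(y,T) \<in> {(xC C', TArr (sigC C') (rhoC C')) | C'. C' \<in> Cs}
                  \<union> {(xM M \<rho>', TArr (TArr (sigM M) (TInter \<rho>' (rho1M M)))
                                     (TArr (sigM M) (RPlus \<rho>' (rho2M M))))
                      | M \<rho>'. M \<in> Ms \<and> is_rty \<rho>' \<and> trd L \<rho>'}"
      using Gamma h by (rule subsetD)
    then show "(\<exists>C'. C' \<in> Cs \<and> y = xC C' \<and> T = TArr (sigC C') (rhoC C'))
       \<or> (\<exists>M \<rho>'. M \<in> Ms \<and> is_rty \<rho>' \<and> trd L \<rho>' \<and> y = xM M \<rho>' \<and> T = MT M \<rho>')"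
      unfolding MT_def by (simp only: Un_iff mem_Collect_eq prod.inject) metis
  qed
  have gC: "T = TArr (sigC C) (rhoC C)" if "(xC C, T) \<in> \<Gamma>" for T
  proof -
    from Gcases[OF that] show ?thesis
    proof
      assume "\<exists>C'. C' \<in> Cs \<and> xC C = xC C' \<and> T = TArr (sigC C') (rhoC C')"
      then obtain C' where "C' \<in> Cs" "xC C = xC C'" "T = TArr (sigC C') (rhoC C')" by blast
      then show ?thesis using xC_inj C by (metis inj_onD)
    next
      assume "\<exists>M \<rho>'. M \<in> Ms \<and> is_rty \<rho>' \<and> trd L \<rho>' \<and> xC C = xM M \<rho>' \<and> T = MT M \<rho>'"
      then show ?thesis using x_disj C by blast
    qed
  qed
  have gM: "T = MT M \<rho>'" if "(xM M \<rho>', T) \<in> \<Gamma>" "M \<in> Ms" "is_rty \<rho>'" "trd L \<rho>'" for M \<rho>' T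
  proof -
    from Gcases[OF that(1)] show ?thesis
    proof
      assume "\<exists>C'. C' \<in> Cs \<and> xM M \<rho>' = xC C' \<and> T = TArr (sigC C') (rhoC C')"
      then show ?thesis using x_disj that by metis
    next
      assume "\<exists>M' \<rho>''. M' \<in> Ms \<and> is_rty \<rho>'' \<and> trd L \<rho>'' \<and> xM M \<rho>' = xM M' \<rho>'' \<and> T = MT M' \<rho>''"
      then obtain M' \<rho>'' where h: "M' \<in> Ms" "is_rty \<rho>''" "trd L \<rho>''" "xM M \<rho>' = xM M' \<rho>''" "T = MT M' \<rho>''"
        by blast
      have "(M, \<rho>') = (M', \<rho>'')"
        using inj_onD[OF xM_inj, of "(M, \<rho>')" "(M', \<rho>'')"] h that by auto
      then show ?thesis using h by simp
    qed
  qed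
  have U: "\<forall>y T1 T2. (y,T1)\<in>\<Gamma> \<longrightarrow> (y,T2)\<in>\<Gamma> \<longrightarrow> T1 = T2"
  proof (intro allI impI)
    fix y T1 T2 assume h1: "(y,T1)\<in>\<Gamma>" and h2: "(y,T2)\<in>\<Gamma>"
    from Gcases[OF h1] show "T1 = T2"
    proof
      assume "\<exists>C'. C' \<in> Cs \<and> y = xC C' \<and> T1 = TArr (sigC C') (rhoC C')"
      then obtain C' where c: "C' \<in> Cs" "y = xC C'" "T1 = TArr (sigC C') (rhoC C')" by blast
      from Gcases[OF h2] show ?thesis
      proof
        assume "\<exists>C'. C' \<in> Cs \<and> y = xC C' \<and> T2 = TArr (sigC C') (rhoC C')"
        then obtain C'' where "C'' \<in> Cs" "y = xC C''" "T2 = TArr (sigC C'') (rhoC C'')" by blast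
        then show ?thesis using c xC_inj by (metis inj_onD)
      next
        assume "\<exists>M \<rho>'. M \<in> Ms \<and> is_rty \<rho>' \<and> trd L \<rho>' \<and> y = xM M \<rho>' \<and> T2 = MT M \<rho>'"
        then show ?thesis using c x_disj by metis
      qed
    next
      assume "\<exists>M \<rho>'. M \<in> Ms \<and> is_rty \<rho>' \<and> trd L \<rho>' \<and> y = xM M \<rho>' \<and> T1 = MT M \<rho>'"
      then obtain M \<rho>' where m: "M \<in> Ms" "is_rty \<rho>'" "trd L \<rho>'" "y = xM M \<rho>'" "T1 = MT M \<rho>'" by blast
      then show ?thesis using gM h2 by metis
    qed
  qed
  define inv where "inv = (\<lambda>F::'l \<Rightarrow> ('a,'l) bty option. finite (dom F) \<and> dom F \<subseteq> L
      \<and> (\<forall>l x. F l = Some x \<longrightarrow> level x \<le> k))"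
  have main: "\<forall>(M, \<rho>')\<in>set ms'. M \<in> Ms \<and> is_rty \<rho>' \<and> trd L \<rho>' \<Longrightarrow>
     \<exists>\<sigma>P F. inv F \<and> (\<forall>\<tau>. tyass \<Gamma> (pipe_trm (Var (xC C)) (map (\<lambda>(M, \<rho>'). Var (xM M \<rho>')) ms')) \<tau>
        \<longrightarrow> \<not> bsub BOmega (Nt \<tau>) \<longrightarrow>
        bcl k \<Delta> (pipe_comb (Cst C) (map (\<lambda>(M, \<rho>'). Cst M) ms')) (BArr \<sigma>P (recb F))
        \<and> bsub (BArr \<sigma>P (recb F)) (Nt \<tau>))" for ms'
  proof (induction ms' rule: rev_induct)
    case Nil
    have cl: "is_rty (rhoC C)" using classes C by blast
    have iv: "inv (Ft (rhoC C))"
      unfolding inv_def using tr_lbl[of L "rhoC C"] trC2[OF C] dom_Ft[of "rhoC C"]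
        tr_level[of L "rhoC C"] kC[OF C] by fastforce
    have bc: "bcl k \<Delta> (Cst C) (BArr (Nt (sigC C)) (Nt (rhoC C)))"
      using bcl.var[OF DC[OF C], of BVar k] by (simp add: bsubst_id subst_level_le_def)
    have e: "bsub (Nt (rhoC C)) (recb (Ft (rhoC C))) \<and> bsub (recb (Ft (rhoC C))) (Nt (rhoC C))"
      using EQ[OF cl] .
    have "tyass \<Gamma> (Var (xC C)) \<tau> \<longrightarrow> \<not> bsub BOmega (Nt \<tau>) \<longrightarrow>
        bcl k \<Delta> (Cst C) (BArr (Nt (sigC C)) (recb (Ft (rhoC C))))
        \<and> bsub (BArr (Nt (sigC C)) (recb (Ft (rhoC C)))) (Nt \<tau>)" for \<tau>
    proof (intro impI)
      assume ty: "tyass \<Gamma> (Var (xC C)) \<tau>" and no: "\<not> bsub BOmega (Nt \<tau>)"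
      obtain T where T: "(xC C, T) \<in> \<Gamma>" "bsub (Nt T) (Nt \<tau>)"
        using varlemma[OF ty HOL.refl no U] by blast
      have T': "T = TArr (sigC C) (rhoC C)" using gC[OF T(1)] .
      have a: "bsub (BArr (Nt (sigC C)) (Nt (rhoC C))) (BArr (Nt (sigC C)) (recb (Ft (rhoC C))))"
        using e by (simp add: bsub.arr_mono bsub.refl)
      have b: "bsub (BArr (Nt (sigC C)) (recb (Ft (rhoC C)))) (BArr (Nt (sigC C)) (Nt (rhoC C)))"
        using e by (simp add: bsub.arr_mono bsub.refl)
      show "bcl k \<Delta> (Cst C) (BArr (Nt (sigC C)) (recb (Ft (rhoC C))))
        \<and> bsub (BArr (Nt (sigC C)) (recb (Ft (rhoC C)))) (Nt \<tau>)"
        using bcl.subsum[OF bc a] b T T' by (auto intro: bsub.trans)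
    qed
    then show ?case using iv by (auto simp: pipe_trm_def pipe_comb_def)
  next
    case (snoc y ms')
    obtain M \<rho>' where y: "y = (M, \<rho>')" by (cases y)
    have mv: "M \<in> Ms" "is_rty \<rho>'" "trd L \<rho>'" using snoc.prems y by auto
    from snoc.IH snoc.prems obtain \<sigma>P F where ivF: "inv F" and
      IH: "\<forall>\<tau>. tyass \<Gamma> (pipe_trm (Var (xC C)) (map (\<lambda>(M, \<rho>'). Var (xM M \<rho>')) ms')) \<tau>
        \<longrightarrow> \<not> bsub BOmega (Nt \<tau>) \<longrightarrow>
        bcl k \<Delta> (pipe_comb (Cst C) (map (\<lambda>(M, \<rho>'). Cst M) ms')) (BArr \<sigma>P (recb F))
        \<and> bsub (BArr \<sigma>P (recb F)) (Nt \<tau>)" by auto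
    define E0 :: "'l trm" where "E0 = pipe_trm (Var (xC C)) (map (\<lambda>(M, \<rho>'). Var (xM M \<rho>')) ms')"
    define E0' :: "'l trm comb" where "E0' = pipe_comb (Cst C) (map (\<lambda>(M, \<rho>'). Cst M) ms')"
    define F' where "F' = (F |` (L - lbl (rho2M M))) ++ Ft (rho2M M)"
    have mx: "is_rty (rho1M M)" "is_rty (rho2M M)" "lbl (rho2M M) \<subseteq> L" using mixins mv by auto
    have ivF': "inv F'"
    proof -
      have "finite (dom F')" using ivF unfolding inv_def F'_def by auto
      moreover have "dom F' \<subseteq> L" using ivF mx(3) dom_Ft[of "rho2M M"] unfolding inv_def F'_def by auto
      moreover have "level x \<le> k" if "F' l = Some x" for l x
      proof (cases "Ft (rho2M M) l")
        case None
        then have "F l = Some x" using that by (auto simp: F'_def map_add_def restrict_map_def split: if_splits)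
        then show ?thesis using ivF unfolding inv_def by auto
      next
        case (Some z)
        then have "z = x" using that by (auto simp: F'_def)
        then show ?thesis using tr_level[of L "rho2M M" l z] Some trM[OF mv(1)] kM[OF mv(1)] by auto
      qed
      ultimately show ?thesis unfolding inv_def by blast
    qed
    have nv: "novar (Nt (sigM M))" "novar (Nt (rho1M M))" "novar (Nt (rho2M M))"
      using trM[OF mv(1)] tr_novar by blast+
    have keyP: "bcl k \<Delta> (CApp (Cst M) E0') (BArr (Nt (sigM M)) (recb F'))
         \<and> bsub (BArr (Nt (sigM M)) (recb F')) (Nt \<tau>)"
      if "bcl k \<Delta> E0' (BArr \<sigma>P (recb F))"
         "bsub (BArr \<sigma>P (recb F)) (BArr (Nt (sigM M)) (BInter (Nt \<rho>') (Nt (rho1M M))))"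
         "bsub (BArr (Nt (sigM M)) (recb (Ft \<rho>' ++ Ft (rho2M M)))) (Nt \<tau>)" for \<tau>
      unfolding F'_def
      by (rule key[OF that(1) _ _ that(2) that(3) DM[OF mv(1)] mv(2) tr_lbl[OF mv(3)]
            rty_not_omega[OF mx(1)] mx(2) finL nv])
         (use ivF in \<open>auto simp: inv_def\<close>)
    have xT: "T = TArr (TArr (sigM M) (TInter \<rho>' (rho1M M))) (TArr (sigM M) (RPlus \<rho>' (rho2M M)))"
      if "(xM M \<rho>', T) \<in> \<Gamma>" for T
      using gM[OF that mv] unfolding MT_def .
    have "tyass \<Gamma> (App (Var (xM M \<rho>')) E0) \<tau> \<longrightarrow> \<not> bsub BOmega (Nt \<tau>) \<longrightarrow>
        bcl k \<Delta> (CApp (Cst M) E0') (BArr (Nt (sigM M)) (recb F'))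
        \<and> bsub (BArr (Nt (sigM M)) (recb F')) (Nt \<tau>)" for \<tau>
    proof (intro impI)
      assume ty: "tyass \<Gamma> (App (Var (xM M \<rho>')) E0) \<tau>" and no: "\<not> bsub BOmega (Nt \<tau>)"
      show "bcl k \<Delta> (CApp (Cst M) E0') (BArr (Nt (sigM M)) (recb F'))
        \<and> bsub (BArr (Nt (sigM M)) (recb F')) (Nt \<tau>)"
        by (rule step[OF U xT _ keyP mx(1) ty HOL.refl HOL.refl no])
           (use IH in \<open>auto simp: E0_def E0'_def\<close>)
    qed
    note st = this
    have p1: "pipe_trm (Var (xC C)) (map (\<lambda>(M, \<rho>'). Var (xM M \<rho>')) (ms' @ [y])) = App (Var (xM M \<rho>')) E0"
      by (simp add: pipe_trm_def E0_def y)
    have p2: "pipe_comb (Cst C) (map (\<lambda>(M, \<rho>'). Cst M) (ms' @ [y])) = CApp (Cst M) E0'"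
      by (simp add: pipe_comb_def E0'_def y)
    show ?case
      apply (rule exI[of _ "Nt (sigM M)"], rule exI[of _ F'])
      unfolding p1 p2 using ivF' st by blast
  qed
  from main[OF ms] obtain \<sigma>P F where
    M: "\<forall>\<tau>. tyass \<Gamma> (pipe_trm (Var (xC C)) (map (\<lambda>(M, \<rho>'). Var (xM M \<rho>')) ms)) \<tau>
        \<longrightarrow> \<not> bsub BOmega (Nt \<tau>) \<longrightarrow>
        bcl k \<Delta> (pipe_comb (Cst C) (map (\<lambda>(M, \<rho>'). Cst M) ms)) (BArr \<sigma>P (recb F))
        \<and> bsub (BArr \<sigma>P (recb F)) (Nt \<tau>)" by blast
  have trT: "trt L (TArr \<sigma> \<rho>) = Nt (TArr \<sigma> \<rho>)"
  proof -
    obtain b where b: "tr L (TArr \<sigma> \<rho>) = Some b" using tr_def by blast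
    from tr_N[OF b] b show ?thesis by simp
  qed
  have no: "\<not> bsub BOmega (Nt (TArr \<sigma> \<rho>))"
  proof
    assume "bsub BOmega (Nt (TArr \<sigma> \<rho>))"
    then have "bsub BOmega (Nt \<rho>)" using beta_omega by simp
    then show False using rty_not_omega[OF rho] by simp
  qed
  have res: "bcl k \<Delta> (pipe_comb (Cst C) (map (\<lambda>(M, \<rho>'). Cst M) ms)) (BArr \<sigma>P (recb F))
        \<and> bsub (BArr \<sigma>P (recb F)) (Nt (TArr \<sigma> \<rho>))" using M typed no by blast
  have "bcl k \<Delta> (pipe_comb (Cst C) (map (\<lambda>(M, \<rho>'). Cst M) ms)) (trt L (TArr \<sigma> \<rho>))"
    using bcl.subsum[OF res[THEN conjunct1] res[THEN conjunct2]] trT by simp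
  then show ?thesis unfolding k_def \<Delta>_def .
qed

end
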